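(* Let $V_1,V_2\subset\mathbb R^n\setminus\{0\}$ be finite disjoint sets such that no element of $V_1\cup V_2$ is a positive multiple of another, and suppose $\operatorname{pos}V_1\cap\operatorname{pos}V_2\neq\{0\}$. Then there exist $V_1'\subseteq V_1$ and $V_2'\subseteq V_2$ such that $(\operatorname{pos}V_1'\cap\operatorname{pos}V_2')\setminus\{0\}$ is exactly one open ray from the origin, this ray is contained in the relative interior of both $\operatorname{pos}V_1'$ and $\operatorname{pos}V_2'$, and $V_1'\cup V_2'$ is separated from $0$ (i.e. $0\notin\operatorname{conv}(V_1'\cup V_2')$).
   Context: $\operatorname{pos}A$ denotes the positive hull of $A$, the set of all nonnegative linear combinations of elements of $A$. *)

theory Defs
  imports "HOL-Analysis.Analysis"
begin

definition pos :: "'a::real_vector set \<Rightarrow> 'a set" where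
  "pos A = {(\<Sum>v\<in>A. c v *\<^sub>R v) | c. \<forall>v\<in>A. c v \<ge> 0}"

definition open_ray :: "'a::real_vector \<Rightarrow> 'a set" where
  "open_ray d = {t *\<^sub>R d | t. t > 0}"

end

theory Submission
  imports Defs
begin

lemma in_pos: "\<forall>v\<in>A. c v \<ge> 0 \<Longrightarrow> (\<Sum>v\<in>A. c v *\<^sub>R v) \<in> pos A"
  unfolding pos_def by blast

lemma zero_in_pos: "0 \<in> pos A"
  using in_pos[of A "\<lambda>_. 0"] by simp

lemma pos_remove:
  assumes "finite A" "u \<in> A" "\<forall>v\<in>A. c v \<ge> 0" "c u = 0"
  shows "(\<Sum>v\<in>A. c v *\<^sub>R v) \<in> pos (A - {u})"
proof -
  have "(\<Sum>v\<in>A. c v *\<^sub>R v) = c u *\<^sub>R u + (\<Sum>v\<in>A - {u}. c v *\<^sub>R v)"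
    using sum.remove[OF assms(1,2)] by blast
  then show ?thesis using assms in_pos[of "A - {u}" c] by simp
qed

lemma convex_pos: "convex (pos A)"
  unfolding convex_def
proof (intro ballI allI impI)
  fix x y and u v :: real
  assume "x \<in> pos A" "y \<in> pos A" "0 \<le> u" "0 \<le> v" "u + v = 1"
  then obtain c d where c: "x = (\<Sum>w\<in>A. c w *\<^sub>R w)" "\<forall>w\<in>A. c w \<ge> 0"
    and d: "y = (\<Sum>w\<in>A. d w *\<^sub>R w)" "\<forall>w\<in>A. d w \<ge> 0"
    unfolding pos_def by blast
  have eq: "u *\<^sub>R x + v *\<^sub>R y = (\<Sum>w\<in>A. (u * c w + v * d w) *\<^sub>R w)"
    by (simp add: c d scaleR_sum_right sum.distrib scaleR_add_left)
  have nn: "\<forall>w\<in>A. u * c w + v * d w \<ge> 0"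
    using c d \<open>0 \<le> u\<close> \<open>0 \<le> v\<close> by simp
  show "u *\<^sub>R x + v *\<^sub>R y \<in> pos A" by (subst eq) (rule in_pos[OF nn])
qed

lemma relint_pos:
  fixes A :: "'a::euclidean_space set"
  assumes fin: "finite A" and cpos: "\<forall>v\<in>A. c v > 0"
  shows "(\<Sum>v\<in>A. c v *\<^sub>R v) \<in> rel_interior (pos A)"
proof -
  have ne: "pos A \<noteq> {}" using zero_in_pos by blast
  show ?thesis
    unfolding convex_rel_interior_iff[OF convex_pos ne]
  proof
    fix y assume "y \<in> pos A"
    then obtain d where d: "y = (\<Sum>w\<in>A. d w *\<^sub>R w)" "\<forall>w\<in>A. d w \<ge> 0"
      unfolding pos_def by blast
    define \<delta> where "\<delta> = Min (insert 1 ((\<lambda>v. c v / (d v + 1)) ` A))"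
    have fin2: "finite (insert 1 ((\<lambda>v. c v / (d v + 1)) ` A))" using fin by simp
    have dpos: "\<delta> > 0" unfolding \<delta>_def
      using fin2 cpos d(2) by (auto simp: Min_gr_iff)
    have dle: "\<delta> * d v \<le> c v" if "v \<in> A" for v
    proof -
      have "\<delta> \<le> c v / (d v + 1)" unfolding \<delta>_def
        using fin2 that by (intro Min_le) auto
      then have "\<delta> * (d v + 1) \<le> c v" using d(2) that by (auto simp add: le_divide_eq add_nonneg_pos)
      then show ?thesis using dpos by (simp add: algebra_simps)
    qed
    have eq: "(1 - (1 + \<delta>)) *\<^sub>R y + (1 + \<delta>) *\<^sub>R (\<Sum>v\<in>A. c v *\<^sub>R v)
        = (\<Sum>v\<in>A. ((1 - (1 + \<delta>)) * d v + (1 + \<delta>) * c v) *\<^sub>R v)"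
      unfolding d scaleR_sum_right sum.distrib[symmetric] scaleR_scaleR
      by (rule sum.cong) (simp_all add: scaleR_add_left scaleR_diff_left)
    have nn: "\<forall>v\<in>A. (1 - (1 + \<delta>)) * d v + (1 + \<delta>) * c v \<ge> 0"
    proof
      fix v assume v: "v \<in> A"
      have "\<delta> * c v \<ge> 0" using dpos cpos v by (simp add: less_imp_le)
      then show "(1 - (1 + \<delta>)) * d v + (1 + \<delta>) * c v \<ge> 0"
        using dle[OF v] by (simp add: algebra_simps)
    qed
    have "(1 - (1 + \<delta>)) *\<^sub>R y + (1 + \<delta>) *\<^sub>R (\<Sum>v\<in>A. c v *\<^sub>R v) \<in> pos A"
      by (subst eq) (rule in_pos[OF nn])
    then show "\<exists>e>1. (1 - e) *\<^sub>R y + e *\<^sub>R (\<Sum>v\<in>A. c v *\<^sub>R v) \<in> pos A"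
      using dpos by (intro exI[of _ "1 + \<delta>"]) simp
  qed
qed


lemma core:
  fixes \<phi> :: "'b \<Rightarrow> 'a::real_vector"
  assumes fin: "finite I" and PI: "P \<subseteq> I"
    and H: "\<And>f. \<forall>i\<in>I. f i \<ge> 0 \<Longrightarrow> (\<Sum>i\<in>I. f i *\<^sub>R \<phi> i) = 0
              \<Longrightarrow> (\<Sum>i\<in>P. f i *\<^sub>R \<phi> i) \<noteq> 0 \<Longrightarrow> \<forall>i\<in>I. f i > 0"
    and a0: "\<forall>i\<in>I. \<alpha> i \<ge> 0" and a1: "(\<Sum>i\<in>I. \<alpha> i *\<^sub>R \<phi> i) = 0"
    and a2: "(\<Sum>i\<in>P. \<alpha> i *\<^sub>R \<phi> i) \<noteq> 0"
    and g: "(\<Sum>i\<in>I. \<gamma> i *\<^sub>R \<phi> i) = 0"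
  shows "\<exists>k. \<forall>i\<in>I. \<gamma> i = k * \<alpha> i"
proof (rule ccontr)
  assume nk: "\<not> (\<exists>k. \<forall>i\<in>I. \<gamma> i = k * \<alpha> i)"
  have apos: "\<forall>i\<in>I. \<alpha> i > 0" using H[OF a0 a1 a2] .
  have Ine: "I \<noteq> {}" using a2 PI by auto
  define r where "r i = \<gamma> i / \<alpha> i" for i
  define M where "M = Max (r ` I)"
  have rM: "r i \<le> M" if "i \<in> I" for i unfolding M_def using fin that by simp
  have "M \<in> r ` I" unfolding M_def using fin Ine by (intro Max_in) auto
  then obtain i0 where i0: "i0 \<in> I" "r i0 = M" by auto
  have gr: "\<gamma> i = r i * \<alpha> i" if "i \<in> I" for i
    using apos that unfolding r_def by force
  have "\<not> (\<forall>i\<in>I. \<gamma> i = M * \<alpha> i)" using nk by blast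
  then obtain i1 where i1': "i1 \<in> I" "\<gamma> i1 \<noteq> M * \<alpha> i1" by blast
  have i1: "i1 \<in> I" "r i1 \<noteq> M" using i1' gr[OF i1'(1)] by auto
  define a' where "a' i = M * \<alpha> i - \<gamma> i" for i
  have a'eq: "a' i = \<alpha> i * (M - r i)" if "i \<in> I" for i
    unfolding a'_def using gr[OF that] by (simp add: algebra_simps)
  have a'nn: "\<forall>i\<in>I. a' i \<ge> 0"
    using a'eq rM apos by (simp add: less_imp_le)
  have a'0: "a' i0 = 0" using a'eq[OF i0(1)] i0(2) by simp
  have a'1: "a' i1 > 0" using a'eq[OF i1(1)] rM[OF i1(1)] i1(2) apos i1(1) by simp
  have sa': "(\<Sum>i\<in>I. a' i *\<^sub>R \<phi> i) = 0"
  proof -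
    have "(\<Sum>i\<in>I. (M * \<alpha> i) *\<^sub>R \<phi> i) = M *\<^sub>R (\<Sum>i\<in>I. \<alpha> i *\<^sub>R \<phi> i)"
      by (simp add: scaleR_sum_right)
    then show ?thesis unfolding a'_def scaleR_diff_left sum_subtractf using a1 g by simp
  qed
  show False
  proof (cases "(\<Sum>i\<in>P. a' i *\<^sub>R \<phi> i) = 0")
    case False
    then show False using H[OF a'nn sa'] a'0 i0(1) by fastforce
  next
    case True
    define J where "J = {i\<in>I. a' i > 0}"
    have finJ: "finite J" using fin unfolding J_def by simp
    have Jne: "J \<noteq> {}" using i1 a'1 unfolding J_def by blast
    define s where "s = Min ((\<lambda>i. \<alpha> i / a' i) ` J)"
    have "s \<in> (\<lambda>i. \<alpha> i / a' i) ` J" unfolding s_def using finJ Jne by (intro Min_in) auto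
    then obtain i2 where i2: "i2 \<in> J" "s = \<alpha> i2 / a' i2" by auto
    have sle: "s \<le> \<alpha> i / a' i" if "i \<in> J" for i
      unfolding s_def using finJ that by simp
    define a'' where "a'' i = \<alpha> i - s * a' i" for i
    have a''nn: "\<forall>i\<in>I. a'' i \<ge> 0"
    proof
      fix i assume i: "i \<in> I"
      show "a'' i \<ge> 0"
      proof (cases "a' i > 0")
        case True
        then have "i \<in> J" unfolding J_def using i by simp
        then have "s * a' i \<le> \<alpha> i" using sle True by (simp add: le_divide_eq)
        then show ?thesis unfolding a''_def by simp
      next
        case False
        then have "a' i = 0" using a'nn i by force
        then show ?thesis unfolding a''_def using a0 i by simp
      qed
    qed
    have i2I: "i2 \<in> I" "a' i2 > 0" using i2(1) unfolding J_def by auto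
    have a''0: "a'' i2 = 0" unfolding a''_def i2(2) using i2I by simp
    have sI: "(\<Sum>i\<in>I. a'' i *\<^sub>R \<phi> i) = 0"
    proof -
      have "(\<Sum>i\<in>I. (s * a' i) *\<^sub>R \<phi> i) = s *\<^sub>R (\<Sum>i\<in>I. a' i *\<^sub>R \<phi> i)"
        by (simp add: scaleR_sum_right)
      then show ?thesis unfolding a''_def scaleR_diff_left sum_subtractf using a1 sa' by simp
    qed
    have sP: "(\<Sum>i\<in>P. a'' i *\<^sub>R \<phi> i) \<noteq> 0"
    proof -
      have "(\<Sum>i\<in>P. (s * a' i) *\<^sub>R \<phi> i) = s *\<^sub>R (\<Sum>i\<in>P. a' i *\<^sub>R \<phi> i)"
        by (simp add: scaleR_sum_right)
      then show ?thesis unfolding a''_def scaleR_diff_left sum_subtractf using a2 True by simp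
    qed
    show False using H[OF a''nn sI sP] a''0 i2I(1) by fastforce
  qed
qed


lemma split_sum:
  fixes S T :: "'a::real_vector set"
  assumes "finite S" "finite T" "S \<inter> T = {}"
  shows "(\<Sum>i\<in>S \<union> T. f i *\<^sub>R (if i \<in> S then i else - i))
         = (\<Sum>v\<in>S. f v *\<^sub>R v) - (\<Sum>w\<in>T. f w *\<^sub>R w)"
proof -
  have "(\<Sum>i\<in>S \<union> T. f i *\<^sub>R (if i \<in> S then i else - i))
     = (\<Sum>i\<in>S. f i *\<^sub>R (if i \<in> S then i else - i)) + (\<Sum>i\<in>T. f i *\<^sub>R (if i \<in> S then i else - i))"
    using assms by (simp add: sum.union_disjoint)
  also have "(\<Sum>i\<in>S. f i *\<^sub>R (if i \<in> S then i else - i)) = (\<Sum>v\<in>S. f v *\<^sub>R v)"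
    by (rule sum.cong) auto
  also have "(\<Sum>i\<in>T. f i *\<^sub>R (if i \<in> S then i else - i)) = (\<Sum>w\<in>T. - (f w *\<^sub>R w))"
    using assms(3) by (intro sum.cong) auto
  also have "\<dots> = - (\<Sum>w\<in>T. f w *\<^sub>R w)" by (simp add: sum_negf)
  finally show ?thesis by simp
qed

theorem lemma2p1:
  fixes V1 V2 :: "'a::euclidean_space set"
  assumes "finite V1" and "finite V2"
    and "0 \<notin> V1" and "0 \<notin> V2"
    and "V1 \<inter> V2 = {}"
    and "\<forall>u\<in>V1 \<union> V2. \<forall>v\<in>V1 \<union> V2. u \<noteq> v \<longrightarrow> \<not> (\<exists>c>0. u = c *\<^sub>R v)"
    and "pos V1 \<inter> pos V2 \<noteq> {0}"
  shows "\<exists>V1' V2' d. V1' \<subseteq> V1 \<and> V2' \<subseteq> V2 \<and> d \<noteq> 0 \<and>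
           (pos V1' \<inter> pos V2') - {0} = open_ray d \<and>
           open_ray d \<subseteq> rel_interior (pos V1') \<and>
           open_ray d \<subseteq> rel_interior (pos V2') \<and>
           0 \<notin> convex hull (V1' \<union> V2')"
proof -
  define Pr where "Pr = (\<lambda>(S::'a set, T::'a set). S \<subseteq> V1 \<and> T \<subseteq> V2 \<and> pos S \<inter> pos T \<noteq> {0})"
  define m where "m = (\<lambda>(S::'a set, T::'a set). card S + card T)"
  have "Pr (V1, V2)" unfolding Pr_def using assms(7) by simp
  then obtain ST where ST: "Pr ST" and least: "\<And>y. Pr y \<Longrightarrow> m ST \<le> m y"
    using ex_has_least_nat[of Pr "(V1,V2)" m] by blast
  obtain S T where STeq: "ST = (S, T)" by (cases ST)
  have SV: "S \<subseteq> V1" and TV: "T \<subseteq> V2" and ne: "pos S \<inter> pos T \<noteq> {0}"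
    using ST unfolding STeq Pr_def by auto
  have finS: "finite S" using SV assms(1) finite_subset by blast
  have finT: "finite T" using TV assms(2) finite_subset by blast
  have disj: "S \<inter> T = {}" using SV TV assms(5) by blast
  have minS: "y = 0" if "u \<in> S" "y \<in> pos (S - {u})" "y \<in> pos T" for u y
  proof (rule ccontr)
    assume "y \<noteq> 0"
    then have "Pr (S - {u}, T)" unfolding Pr_def using that SV TV by auto
    then have "m ST \<le> m (S - {u}, T)" by (rule least)
    moreover have "card (S - {u}) < card S" using finS that(1) by (rule card_Diff1_less)
    ultimately show False unfolding STeq m_def by simp
  qed
  have minT: "y = 0" if "u \<in> T" "y \<in> pos S" "y \<in> pos (T - {u})" for u y
  proof (rule ccontr)
    assume "y \<noteq> 0"
    then have "Pr (S, T - {u})" unfolding Pr_def using that SV TV by auto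
    then have "m ST \<le> m (S, T - {u})" by (rule least)
    moreover have "card (T - {u}) < card T" using finT that(1) by (rule card_Diff1_less)
    ultimately show False unfolding STeq m_def by simp
  qed
  obtain x where x: "x \<in> pos S" "x \<in> pos T" "x \<noteq> 0"
    using ne zero_in_pos by blast
  obtain \<alpha> where al: "x = (\<Sum>v\<in>S. \<alpha> v *\<^sub>R v)" "\<forall>v\<in>S. \<alpha> v \<ge> 0"
    using x(1) unfolding pos_def by blast
  obtain \<beta> where be: "x = (\<Sum>v\<in>T. \<beta> v *\<^sub>R v)" "\<forall>v\<in>T. \<beta> v \<ge> 0"
    using x(2) unfolding pos_def by blast
  define I where "I = S \<union> T"
  define \<phi> where "\<phi> i = (if i \<in> S then i else - i)" for i
  define a where "a i = (if i \<in> S then \<alpha> i else \<beta> i)" for i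
  have finI: "finite I" unfolding I_def using finS finT by simp
  have spl: "(\<Sum>i\<in>I. f i *\<^sub>R \<phi> i) = (\<Sum>v\<in>S. f v *\<^sub>R v) - (\<Sum>w\<in>T. f w *\<^sub>R w)" for f
    unfolding I_def \<phi>_def using split_sum[OF finS finT disj] .
  have splS: "(\<Sum>i\<in>S. f i *\<^sub>R \<phi> i) = (\<Sum>v\<in>S. f v *\<^sub>R v)" for f
    unfolding \<phi>_def by (rule sum.cong) auto
  have H: "\<forall>i\<in>I. f i > 0" if f0: "\<forall>i\<in>I. f i \<ge> 0" and f1: "(\<Sum>i\<in>I. f i *\<^sub>R \<phi> i) = 0"
    and f2: "(\<Sum>i\<in>S. f i *\<^sub>R \<phi> i) \<noteq> 0" for f
  proof
    fix i assume iI: "i \<in> I"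
    define y where "y = (\<Sum>v\<in>S. f v *\<^sub>R v)"
    have y0: "y \<noteq> 0" using f2 splS unfolding y_def by simp
    have yT: "y = (\<Sum>w\<in>T. f w *\<^sub>R w)" using f1 spl unfolding y_def by simp
    show "f i > 0"
    proof (rule ccontr)
      assume "\<not> f i > 0"
      then have fi: "f i = 0" using f0 iI by force
      show False
      proof (cases "i \<in> S")
        case True
        have "y \<in> pos (S - {i})" unfolding y_def
          using pos_remove[of S i f] finS True fi f0 I_def by auto
        moreover have "y \<in> pos T" unfolding yT using f0 I_def by (intro in_pos) auto
        ultimately show False using minS[OF True] y0 by blast
      next
        case False
        then have iT: "i \<in> T" using iI I_def by auto
        have "y \<in> pos (T - {i})" unfolding yT
          using pos_remove[of T i f] finT iT fi f0 I_def by auto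
        moreover have "y \<in> pos S" unfolding y_def using f0 I_def by (intro in_pos) auto
        ultimately show False using minT[OF iT] y0 by blast
      qed
    qed
  qed
  have aS: "(\<Sum>v\<in>S. a v *\<^sub>R v) = x" unfolding al(1) a_def by (rule sum.cong) auto
  have aT: "(\<Sum>v\<in>T. a v *\<^sub>R v) = x" unfolding be(1) a_def using disj by (intro sum.cong) auto
  have a0: "\<forall>i\<in>I. a i \<ge> 0" using al(2) be(2) unfolding a_def I_def by auto
  have a1: "(\<Sum>i\<in>I. a i *\<^sub>R \<phi> i) = 0" using spl aS aT by simp
  have a2: "(\<Sum>i\<in>S. a i *\<^sub>R \<phi> i) \<noteq> 0" using splS aS x(3) by simp
  have K: "\<exists>k. \<forall>i\<in>I. \<gamma> i = k * a i" if "(\<Sum>i\<in>I. \<gamma> i *\<^sub>R \<phi> i) = 0" for \<gamma>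
    using core[OF finI _ H a0 a1 a2 that] I_def by blast
  have apos: "\<forall>i\<in>I. a i > 0" using H[OF a0 a1 a2] .
  have Sne: "S \<noteq> {}" using al(1) x(3) by auto
  have Tne: "T \<noteq> {}" using be(1) x(3) by auto
  have ray_sub: "t *\<^sub>R x \<in> rel_interior (pos S) \<and> t *\<^sub>R x \<in> rel_interior (pos T)
      \<and> t *\<^sub>R x \<in> pos S \<and> t *\<^sub>R x \<in> pos T" if t: "t > 0" for t
  proof -
    have eS: "t *\<^sub>R x = (\<Sum>v\<in>S. (t * a v) *\<^sub>R v)" unfolding aS[symmetric] by (simp add: scaleR_sum_right)
    have eT: "t *\<^sub>R x = (\<Sum>v\<in>T. (t * a v) *\<^sub>R v)" unfolding aT[symmetric] by (simp add: scaleR_sum_right)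
    have pS: "\<forall>v\<in>S. t * a v > 0" using apos t I_def by auto
    have pT: "\<forall>v\<in>T. t * a v > 0" using apos t I_def by auto
    have pS': "\<forall>v\<in>S. t * a v \<ge> 0" using pS by (simp add: less_imp_le)
    have pT': "\<forall>v\<in>T. t * a v \<ge> 0" using pT by (simp add: less_imp_le)
    have 1: "t *\<^sub>R x \<in> rel_interior (pos S)" by (subst eS) (rule relint_pos[OF finS pS])
    have 2: "t *\<^sub>R x \<in> rel_interior (pos T)" by (subst eT) (rule relint_pos[OF finT pT])
    have 3: "t *\<^sub>R x \<in> pos S" by (subst eS) (rule in_pos[OF pS'])
    have 4: "t *\<^sub>R x \<in> pos T" by (subst eT) (rule in_pos[OF pT'])
    show ?thesis using 1 2 3 4 by blast
  qed
  have eq: "(pos S \<inter> pos T) - {0} = open_ray x"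
  proof
    show "open_ray x \<subseteq> (pos S \<inter> pos T) - {0}"
      unfolding open_ray_def using ray_sub x(3) by auto
  next
    show "(pos S \<inter> pos T) - {0} \<subseteq> open_ray x"
    proof
      fix y assume y: "y \<in> (pos S \<inter> pos T) - {0}"
      obtain c where c: "y = (\<Sum>v\<in>S. c v *\<^sub>R v)" "\<forall>v\<in>S. c v \<ge> 0"
        using y unfolding pos_def by blast
      obtain e where e: "y = (\<Sum>v\<in>T. e v *\<^sub>R v)" "\<forall>v\<in>T. e v \<ge> 0"
        using y unfolding pos_def by blast
      define \<gamma> where "\<gamma> i = (if i \<in> S then c i else e i)" for i
      have gS: "(\<Sum>v\<in>S. \<gamma> v *\<^sub>R v) = y" unfolding c(1) \<gamma>_def by (rule sum.cong) auto
      have gT: "(\<Sum>v\<in>T. \<gamma> v *\<^sub>R v) = y" unfolding e(1) \<gamma>_def using disj by (intro sum.cong) auto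
      obtain k where k: "\<forall>i\<in>I. \<gamma> i = k * a i" using K[of \<gamma>] spl gS gT by auto
      obtain u where u: "u \<in> S" using Sne by auto
      have "\<gamma> u = k * a u" using k u I_def by auto
      moreover have "\<gamma> u = c u" using u unfolding \<gamma>_def by simp
      ultimately have "k * a u \<ge> 0" using c(2) u by (metis)
      moreover have "a u > 0" using apos u I_def by auto
      ultimately have k0: "k \<ge> 0" by (simp add: zero_le_mult_iff)
      have "y = (\<Sum>v\<in>S. (k * a v) *\<^sub>R v)" unfolding gS[symmetric]
        using k I_def by (intro sum.cong) auto
      also have "\<dots> = k *\<^sub>R x" unfolding aS[symmetric] by (simp add: scaleR_sum_right)
      finally have yk: "y = k *\<^sub>R x" .
      then have "k \<noteq> 0" using y by auto
      then show "y \<in> open_ray x" unfolding open_ray_def using yk k0 by auto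
    qed
  qed
  have conv: "0 \<notin> convex hull (S \<union> T)"
  proof
    assume "0 \<in> convex hull (S \<union> T)"
    then obtain u where u: "\<forall>i\<in>I. 0 \<le> u i" "sum u I = 1" "(\<Sum>i\<in>I. u i *\<^sub>R i) = 0"
      unfolding convex_hull_finite[OF finI[unfolded I_def]] I_def by auto
    define \<gamma> where "\<gamma> i = (if i \<in> S then u i else - u i)" for i
    have "(\<Sum>i\<in>I. \<gamma> i *\<^sub>R \<phi> i) = (\<Sum>i\<in>I. u i *\<^sub>R i)"
      unfolding \<gamma>_def \<phi>_def by (rule sum.cong) auto
    then obtain k where k: "\<forall>i\<in>I. \<gamma> i = k * a i" using K[of \<gamma>] u(3) by auto
    obtain s where s: "s \<in> S" using Sne by auto
    obtain t where t: "t \<in> T" using Tne by auto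
    have tS: "t \<notin> S" using t disj by auto
    have "\<gamma> s = k * a s" using k s I_def by auto
    moreover have "\<gamma> s = u s" using s unfolding \<gamma>_def by simp
    ultimately have "k * a s \<ge> 0" using u(1) s I_def by (metis UnI1)
    moreover have "a s > 0" using apos s I_def by auto
    ultimately have k0: "k \<ge> 0" by (simp add: zero_le_mult_iff)
    have "\<gamma> t = k * a t" using k t I_def by auto
    moreover have "\<gamma> t = - u t" using tS unfolding \<gamma>_def by simp
    ultimately have "k * a t \<le> 0" using u(1) t I_def by (metis UnI2 neg_le_0_iff_le)
    moreover have "a t > 0" using apos t I_def by auto
    ultimately have k1: "k \<le> 0" by (simp add: mult_le_0_iff)
    have kz: "k = 0" using k0 k1 by simp
    have "\<forall>i\<in>I. u i = 0"
    proof
      fix i assume i: "i \<in> I"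
      have "\<gamma> i = 0" using k i kz by simp
      then show "u i = 0" unfolding \<gamma>_def by (simp split: if_splits)
    qed
    then have "sum u I = 0" by simp
    then show False using u(2) by simp
  qed
  show ?thesis
    using SV TV x(3) eq ray_sub conv unfolding open_ray_def
    by (intro exI[of _ S] exI[of _ T] exI[of _ x]) auto
qed

end
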